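(* Let $(G,u,v,\alpha,\beta)$ be a Guvab with $\lim_{k\to\infty}W_k=0$ such that the sequence $\{W_{2k}\}_{k\ge0}$ is not eventually constant. Then there exist $0<\lambda_{\mathrm{even}}<1$ and $c>0$ such that $W_{2k}\sim c\cdot\lambda_{\mathrm{even}}^{2k}$ as $k\to\infty$.
   Context: A Guvab is a tuple $(G,u,v,\alpha,\beta)$ where $G$ is a finite, connected, simple graph, $u,v\in V(G)$, and $\alpha,\beta\in[0,1]$ with $\alpha\le\beta$. A random walk on $G$ with starting vertex $w$ and laziness $\gamma$ is the Markov chain $R_0=w$ and, for $i\ge1$, $R_i=R_{i-1}$ with probability $\gamma$ and $R_i=t$ with probability $\frac{1-\gamma}{\deg(R_{i-1})}$ for each neighbor $t$ of $R_{i-1}$. $\mu_k$ is the distribution after $k$ steps of the walk from $u$ with laziness $\alpha$, $\nu_k$ that of the walk from $v$ with laziness $\beta$, and $W_k=W(\mu_k,\nu_k)$ is the Wasserstein ($L^1$ optimal transport) distance with respect to the graph distance. A sequence $\{S_i\}$ is eventually constant if there is $N$ with $S_k=S_N$ for all $k\ge N$; $a_k\sim b_k$ means $a_k/b_k\to1$. *)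

theory Defs
  imports "HOL-Analysis.Analysis" "HOL-Library.Landau_Symbols"
begin

definition simple_graph :: "'a set \<Rightarrow> ('a \<Rightarrow> 'a \<Rightarrow> bool) \<Rightarrow> bool" where
  "simple_graph V E \<longleftrightarrow> finite V \<and> V \<noteq> {} \<and>
     (\<forall>x y. E x y \<longrightarrow> x \<in> V \<and> y \<in> V) \<and>
     (\<forall>x y. E x y \<longrightarrow> E y x) \<and> (\<forall>x. \<not> E x x)"

definition edge_rel :: "('a \<Rightarrow> 'a \<Rightarrow> bool) \<Rightarrow> ('a \<times> 'a) set" where
  "edge_rel E = {(x, y). E x y}"

definition connected_graph :: "'a set \<Rightarrow> ('a \<Rightarrow> 'a \<Rightarrow> bool) \<Rightarrow> bool" where
  "connected_graph V E \<longleftrightarrow> simple_graph V E \<and>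
     (\<forall>x\<in>V. \<forall>y\<in>V. (x, y) \<in> (edge_rel E)\<^sup>*)"

definition graph_dist :: "('a \<Rightarrow> 'a \<Rightarrow> bool) \<Rightarrow> 'a \<Rightarrow> 'a \<Rightarrow> nat" where
  "graph_dist E x y = (LEAST n. (x, y) \<in> (edge_rel E) ^^ n)"

definition deg :: "'a set \<Rightarrow> ('a \<Rightarrow> 'a \<Rightarrow> bool) \<Rightarrow> 'a \<Rightarrow> nat" where
  "deg V E x = card {y \<in> V. E x y}"

(* one-step transition probability of the lazy random walk with laziness g;
   (convention: a vertex without neighbours keeps all its mass) *)
definition trans_prob :: "'a set \<Rightarrow> ('a \<Rightarrow> 'a \<Rightarrow> bool) \<Rightarrow> real \<Rightarrow> 'a \<Rightarrow> 'a \<Rightarrow> real" where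
  "trans_prob V E g x y =
     (if x = y then (if deg V E x = 0 then 1 else g)
      else if E x y then (1 - g) / real (deg V E x) else 0)"

fun walk_dist :: "'a set \<Rightarrow> ('a \<Rightarrow> 'a \<Rightarrow> bool) \<Rightarrow> real \<Rightarrow> 'a \<Rightarrow> nat \<Rightarrow> 'a \<Rightarrow> real" where
  "walk_dist V E g w 0 = (\<lambda>y. if y = w then 1 else 0)"
| "walk_dist V E g w (Suc k) =
     (\<lambda>y. \<Sum>x\<in>V. walk_dist V E g w k x * trans_prob V E g x y)"

definition coupling :: "'a set \<Rightarrow> ('a \<Rightarrow> real) \<Rightarrow> ('a \<Rightarrow> real) \<Rightarrow> ('a \<Rightarrow> 'a \<Rightarrow> real) \<Rightarrow> bool" where
  "coupling V \<mu> \<nu> \<pi> \<longleftrightarrow>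
     (\<forall>x\<in>V. \<forall>y\<in>V. \<pi> x y \<ge> 0) \<and>
     (\<forall>x\<in>V. (\<Sum>y\<in>V. \<pi> x y) = \<mu> x) \<and>
     (\<forall>y\<in>V. (\<Sum>x\<in>V. \<pi> x y) = \<nu> y)"

definition wasserstein :: "'a set \<Rightarrow> ('a \<Rightarrow> 'a \<Rightarrow> bool) \<Rightarrow> ('a \<Rightarrow> real) \<Rightarrow> ('a \<Rightarrow> real) \<Rightarrow> real" where
  "wasserstein V E \<mu> \<nu> =
     Inf {c. \<exists>\<pi>. coupling V \<mu> \<nu> \<pi> \<and>
                 c = (\<Sum>x\<in>V. \<Sum>y\<in>V. \<pi> x y * real (graph_dist E x y))}"

definition guvab :: "'a set \<Rightarrow> ('a \<Rightarrow> 'a \<Rightarrow> bool) \<Rightarrow> 'a \<Rightarrow> 'a \<Rightarrow> real \<Rightarrow> real \<Rightarrow> bool" where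
  "guvab V E u v \<alpha> \<beta> \<longleftrightarrow> connected_graph V E \<and> u \<in> V \<and> v \<in> V \<and>
     0 \<le> \<alpha> \<and> \<alpha> \<le> \<beta> \<and> \<beta> \<le> 1"

definition W :: "'a set \<Rightarrow> ('a \<Rightarrow> 'a \<Rightarrow> bool) \<Rightarrow> 'a \<Rightarrow> 'a \<Rightarrow> real \<Rightarrow> real \<Rightarrow> nat \<Rightarrow> real" where
  "W V E u v \<alpha> \<beta> k = wasserstein V E (walk_dist V E \<alpha> u k) (walk_dist V E \<beta> v k)"

definition eventually_constant :: "(nat \<Rightarrow> 'b) \<Rightarrow> bool" where
  "eventually_constant S \<longleftrightarrow> (\<exists>N. \<forall>k\<ge>N. S k = S N)"

end

theory Submission
  imports Defs "HOL-Library.Function_Algebras" "HOL-Computational_Algebra.Fundamental_Theorem_Algebra"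
begin

definition ES :: "(nat \<Rightarrow> real) \<Rightarrow> bool" where
  "ES s \<longleftrightarrow> (\<exists>R c. finite R \<and> R \<subseteq> {0..} \<and> (\<forall>k. s k = (\<Sum>r\<in>R. c r * r ^ k)))"

lemma ES_gen:
  fixes Z :: "'b set"
  assumes "finite Z" "\<And>z. z \<in> Z \<Longrightarrow> b z \<ge> 0" "\<And>k. s k = (\<Sum>z\<in>Z. d z * b z ^ k)"
  shows "ES s"
proof -
  define c where "c r = (\<Sum>z\<in>{z. z \<in> Z \<and> b z = r}. d z)" for r
  have "s k = (\<Sum>r\<in>b ` Z. c r * r ^ k)" for k
  proof -
    have "s k = (\<Sum>r\<in>b ` Z. \<Sum>z\<in>{z. z \<in> Z \<and> b z = r}. d z * b z ^ k)"
      using assms(3) sum.image_gen[OF assms(1), of "\<lambda>z. d z * b z ^ k" b] by simp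
    also have "\<dots> = (\<Sum>r\<in>b ` Z. c r * r ^ k)"
      unfolding c_def sum_distrib_right by (intro sum.cong refl) auto
    finally show ?thesis .
  qed
  moreover have "b ` Z \<subseteq> {0..}" using assms(2) by auto
  ultimately show ?thesis unfolding ES_def using assms(1) by blast
qed

lemma ES_add: assumes "ES s" "ES t" shows "ES (\<lambda>k. s k + t k)"
proof -
  obtain R1 c1 where 1: "finite R1" "R1 \<subseteq> {0..}" "\<And>k. s k = (\<Sum>r\<in>R1. c1 r * r ^ k)"
    using assms(1) unfolding ES_def by blast
  obtain R2 c2 where 2: "finite R2" "R2 \<subseteq> {0..}" "\<And>k. t k = (\<Sum>r\<in>R2. c2 r * r ^ k)"
    using assms(2) unfolding ES_def by blast
  show ?thesis
  proof (rule ES_gen[where Z = "R1 <+> R2" and b = "case_sum id id" and d = "case_sum c1 c2"])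
    show "finite (R1 <+> R2)" using 1 2 by simp
    show "z \<in> R1 <+> R2 \<Longrightarrow> 0 \<le> case_sum id id z" for z using 1 2 by auto
    show "s k + t k = (\<Sum>z\<in>R1 <+> R2. case_sum c1 c2 z * case_sum id id z ^ k)" for k
      using 1 2 by (simp add: sum.Plus)
  qed
qed

lemma ES_scale: assumes "ES s" shows "ES (\<lambda>k. a * s k)"
proof -
  obtain R c where 1: "finite R" "R \<subseteq> {0..}" "\<And>k. s k = (\<Sum>r\<in>R. c r * r ^ k)"
    using assms(1) unfolding ES_def by blast
  show ?thesis unfolding ES_def
    by (rule exI[of _ R], rule exI[of _ "\<lambda>r. a * c r"]) (simp add: 1 sum_distrib_left mult.assoc)
qed

lemma ES_zero: "ES (\<lambda>k. 0)"
  unfolding ES_def by (rule exI[of _ "{}"]) auto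

lemma ES_sum: assumes "finite I" "\<And>i. i \<in> I \<Longrightarrow> ES (f i)" shows "ES (\<lambda>k. \<Sum>i\<in>I. f i k)"
  using assms by (induction I rule: finite_induct) (auto intro: ES_add ES_zero)

lemma ES_diff: assumes "ES s" "ES t" shows "ES (\<lambda>k. s k - t k)"
  using ES_add[OF assms(1) ES_scale[OF assms(2), of "-1"]] by simp

lemma ES_dom:
  assumes "ES s"
  shows "eventually (\<lambda>k. s k = 0) sequentially \<or>
         (\<exists>m c. m > 0 \<and> c \<noteq> 0 \<and> (\<lambda>k. s k / m ^ k) \<longlonglongrightarrow> c)"
proof -
  obtain R c where R: "finite R" "R \<subseteq> {0..}" and s: "\<And>k. s k = (\<Sum>r\<in>R. c r * r ^ k)"
    using assms unfolding ES_def by blast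
  define R' where "R' = {r\<in>R. r > 0 \<and> c r \<noteq> 0}"
  show ?thesis
  proof (cases "R' = {}")
    case True
    have "s k = 0" if "k \<ge> 1" for k
    proof -
      have "c r * r ^ k = 0" if "r \<in> R" for r
      proof (cases "r = 0")
        case True thus ?thesis using \<open>k \<ge> 1\<close> by simp
      next
        case False
        with R that have "r > 0" by force
        with \<open>R' = {}\<close> that have "c r = 0" unfolding R'_def by auto
        thus ?thesis by simp
      qed
      thus ?thesis unfolding s by (intro sum.neutral) blast
    qed
    hence "eventually (\<lambda>k. s k = 0) sequentially"
      using eventually_sequentially by blast
    thus ?thesis by blast
  next
    case False
    have fR': "finite R'" using R unfolding R'_def by auto
    define m where "m = Max R'"
    have mR': "m \<in> R'" unfolding m_def using False fR' by (rule Max_in[rotated])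
    hence mpos: "m > 0" and cm: "c m \<noteq> 0" and mR: "m \<in> R" unfolding R'_def by auto
    have mmax: "r \<le> m" if "r \<in> R'" for r unfolding m_def using fR' that by simp
    have eq: "s k / m ^ k = (\<Sum>r\<in>R. c r * (r / m) ^ k)" for k
      unfolding s sum_divide_distrib by (simp add: power_divide)
    have lim: "(\<lambda>k. c r * (r / m) ^ k) \<longlonglongrightarrow> (if r = m then c m else 0)" if "r \<in> R" for r
    proof (cases "r = m")
      case True thus ?thesis using mpos by simp
    next
      case False
      show ?thesis
      proof (cases "c r = 0")
        case True thus ?thesis using False by simp
      next
        case cr: False
        have "r \<ge> 0" using R that by auto
        moreover have "r \<le> m" if "r > 0" using mmax[of r] \<open>r \<in> R\<close> cr that unfolding R'_def by auto
        ultimately have "\<bar>r / m\<bar> < 1" using False mpos by (cases "r = 0") auto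
        hence "(\<lambda>k. (r / m) ^ k) \<longlonglongrightarrow> 0" using LIMSEQ_power_zero[of "r/m"] by simp
        hence "(\<lambda>k. c r * (r / m) ^ k) \<longlonglongrightarrow> c r * 0" by (intro tendsto_mult tendsto_const)
        thus ?thesis using False by simp
      qed
    qed
    have "(\<lambda>k. \<Sum>r\<in>R. c r * (r / m) ^ k) \<longlonglongrightarrow> (\<Sum>r\<in>R. if r = m then c m else 0)"
      by (rule tendsto_sum) (rule lim)
    also have "(\<Sum>r\<in>R. if r = m then c m else 0) = c m" using mR R by simp
    finally have "(\<lambda>k. s k / m ^ k) \<longlonglongrightarrow> c m" unfolding eq .
    thus ?thesis using mpos cm by blast
  qed
qed

lemma ES_sign:
  assumes "ES s"
  shows "eventually (\<lambda>k. s k = 0) sequentially \<or> eventually (\<lambda>k. s k > 0) sequentially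
         \<or> eventually (\<lambda>k. s k < 0) sequentially"
proof -
  { fix m c assume m: "m > 0" and c: "c \<noteq> 0" and L: "(\<lambda>k. s k / m ^ k) \<longlonglongrightarrow> c"
    have ?thesis
    proof (cases "c > 0")
      case True
      hence "eventually (\<lambda>k. s k / m ^ k > 0) sequentially" using order_tendstoD(1)[OF L] by blast
      hence "eventually (\<lambda>k. s k > 0) sequentially"
        by (rule eventually_mono) (use m in \<open>simp add: zero_less_divide_iff\<close>)
      thus ?thesis by blast
    next
      case False
      hence "c < 0" using c by simp
      hence "eventually (\<lambda>k. s k / m ^ k < 0) sequentially" using order_tendstoD(2)[OF L] by blast
      hence "eventually (\<lambda>k. s k < 0) sequentially"
        by (rule eventually_mono) (use m in \<open>simp add: divide_less_0_iff\<close>)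
      thus ?thesis by blast
    qed }
  thus ?thesis using ES_dom[OF assms] by blast
qed

lemma ES_final:
  assumes "ES s" "s \<longlonglongrightarrow> 0" "eventually (\<lambda>k. s k \<ge> 0) sequentially"
    and "\<not> eventually (\<lambda>k. s k = 0) sequentially"
  shows "\<exists>m c. 0 < m \<and> m < 1 \<and> c > 0 \<and> ((\<lambda>k. s k / (c * m ^ k)) \<longlonglongrightarrow> 1)"
proof -
  obtain m c where m: "m > 0" and c: "c \<noteq> 0" and L: "(\<lambda>k. s k / m ^ k) \<longlonglongrightarrow> c"
    using ES_dom[OF assms(1)] assms(4) by blast
  have "m < 1"
  proof (rule ccontr)
    assume "\<not> m < 1"
    hence m1: "m \<ge> 1" by simp
    have "(\<lambda>k. s k / m ^ k) \<longlonglongrightarrow> 0"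
    proof (rule Lim_null_comparison[OF _ assms(2)[THEN tendsto_norm_zero]])
      show "\<forall>\<^sub>F k in sequentially. norm (s k / m ^ k) \<le> norm (s k)"
      proof (rule always_eventually, rule allI)
        fix k
        have "1 \<le> m ^ k" using m1 by (simp add: one_le_power)
        thus "norm (s k / m ^ k) \<le> norm (s k)"
          by (simp add: abs_divide divide_le_eq_1 mult_le_cancel_left1 divide_le_eq abs_mult)
      qed
    qed
    with L have "c = 0" using LIMSEQ_unique by blast
    with c show False by simp
  qed
  have "c \<ge> 0"
  proof (rule tendsto_lowerbound[OF L])
    show "\<forall>\<^sub>F k in sequentially. 0 \<le> s k / m ^ k"
      using assms(3) by (rule eventually_mono) (use m in simp)
  qed simp
  hence cpos: "c > 0" using c by simp
  have "(\<lambda>k. (s k / m ^ k) / c) \<longlonglongrightarrow> c / c" by (intro tendsto_divide L tendsto_const) (use c in simp)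
  hence "(\<lambda>k. s k / (c * m ^ k)) \<longlonglongrightarrow> 1" using c by (simp add: field_simps)
  thus ?thesis using m \<open>m < 1\<close> cpos by blast
qed

locale rev_op =
  fixes V :: "'a set" and K :: "'a \<Rightarrow> 'a \<Rightarrow> real" and \<omega> :: "'a \<Rightarrow> real"
  assumes finV: "finite V"
    and wpos: "\<And>x. x \<in> V \<Longrightarrow> \<omega> x > 0"
    and wsym: "\<And>x y. x \<in> V \<Longrightarrow> y \<in> V \<Longrightarrow> K x y * \<omega> y = K y x * \<omega> x"
begin

definition Top :: "('a \<Rightarrow> complex) \<Rightarrow> 'a \<Rightarrow> complex" where
  "Top f = (\<lambda>y. if y \<in> V then (\<Sum>x\<in>V. f x * of_real (K x y)) else 0)"

definition Vs :: "('a \<Rightarrow> complex) set" where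
  "Vs = {f. \<forall>x. x \<notin> V \<longrightarrow> f x = 0}"

definition pa :: "complex poly \<Rightarrow> ('a \<Rightarrow> complex) \<Rightarrow> 'a \<Rightarrow> complex" where
  "pa p f = foldr (\<lambda>a g. \<lambda>y. a * f y + Top g y) (coeffs p) (\<lambda>y. 0)"

lemma Top_Vs: "Top f \<in> Vs" unfolding Top_def Vs_def by auto

lemma Top_add: "Top (\<lambda>y. f y + g y) = (\<lambda>y. Top f y + Top g y)"
  unfolding Top_def by (auto simp: distrib_right sum.distrib)

lemma Top_scale: "Top (\<lambda>y. a * f y) = (\<lambda>y. a * Top f y)"
  unfolding Top_def by (auto simp: sum_distrib_left mult.assoc)

lemma Top_zero: "Top (\<lambda>y. 0) = (\<lambda>y. 0)"
  unfolding Top_def by auto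

lemma Top_diff: "Top (\<lambda>y. f y - g y) = (\<lambda>y. Top f y - Top g y)"
  unfolding Top_def by (auto simp: left_diff_distrib sum_subtractf)

lemma pa_0 [simp]: "pa 0 f = (\<lambda>y. 0)" unfolding pa_def by simp

lemma pa_pCons: "pa (pCons a p) f = (\<lambda>y. a * f y + Top (pa p f) y)"
proof (cases "p = 0 \<and> a = 0")
  case True thus ?thesis by (simp add: pa_def Top_zero)
next
  case False
  hence "coeffs (pCons a p) = a # coeffs p" by (auto simp: cCons_def)
  thus ?thesis unfolding pa_def by simp
qed

lemma pa_Vs: "f \<in> Vs \<Longrightarrow> pa p f \<in> Vs"
  by (induction p rule: pCons_induct) (auto simp: pa_pCons Vs_def Top_def)

lemma pa_add: "pa (p + q) f = (\<lambda>y. pa p f y + pa q f y)"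
proof (induction p q rule: poly_induct2)
  case 0 thus ?case by simp
next
  case (pCons a p b q)
  show ?case unfolding add_pCons pa_pCons pCons Top_add by (simp add: algebra_simps)
qed

lemma pa_smult: "pa (smult a p) f = (\<lambda>y. a * pa p f y)"
proof (induction p rule: pCons_induct)
  case 0 thus ?case by simp
next
  case (pCons b p)
  show ?case unfolding smult_pCons pa_pCons pCons Top_scale by (simp add: algebra_simps)
qed

lemma pa_mult: "pa (p * q) f = pa p (pa q f)"
proof (induction p rule: pCons_induct)
  case 0 thus ?case by simp
next
  case (pCons a p)
  show ?case unfolding mult_pCons_left pa_add pa_smult pa_pCons pCons by simp
qed

lemma pa_const: "pa [:c:] f = (\<lambda>y. c * f y)"
  by (simp add: pa_pCons Top_zero)

lemma pa_one: "pa 1 f = f"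
  using pa_const[of 1 f] by (simp add: one_pCons)

lemma pa_lin: "pa [:-a, 1:] f = (\<lambda>y. Top f y - a * f y)"
  by (simp add: pa_pCons pa_const Top_zero)

definition ip :: "('a \<Rightarrow> complex) \<Rightarrow> ('a \<Rightarrow> complex) \<Rightarrow> complex" where
  "ip f g = (\<Sum>x\<in>V. cnj (f x) * g x * of_real (\<omega> x))"

lemma ip_Top: "ip (Top f) g = ip f (Top g)"
proof -
  have "ip (Top f) g = (\<Sum>y\<in>V. \<Sum>x\<in>V. cnj (f x) * of_real (K x y) * g y * of_real (\<omega> y))"
    unfolding ip_def Top_def by (simp add: sum_distrib_right)
  also have "\<dots> = (\<Sum>x\<in>V. \<Sum>y\<in>V. cnj (f x) * of_real (K x y) * g y * of_real (\<omega> y))"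
    by (rule sum.swap)
  also have "\<dots> = (\<Sum>x\<in>V. \<Sum>y\<in>V. cnj (f x) * g y * of_real (K y x) * of_real (\<omega> x))"
  proof (intro sum.cong refl)
    fix x y assume "x \<in> V" "y \<in> V"
    hence "of_real (K x y) * of_real (\<omega> y) = (of_real (K y x) * of_real (\<omega> x) :: complex)"
      using wsym[of x y] by (metis of_real_mult)
    thus "cnj (f x) * of_real (K x y) * g y * of_real (\<omega> y) =
          cnj (f x) * g y * of_real (K y x) * of_real (\<omega> x)"
      by (metis (no_types, lifting) mult.assoc mult.commute mult.left_commute)
  qed
  also have "\<dots> = ip f (Top g)"
    unfolding ip_def Top_def by (simp add: sum_distrib_left sum_distrib_right mult_ac)
  finally show ?thesis .
qed

lemma ip_self_zero:
  assumes "ip f f = 0" "x \<in> V" shows "f x = 0"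
proof -
  have "ip f f = of_real (\<Sum>x\<in>V. (cmod (f x))^2 * \<omega> x)"
    unfolding ip_def of_real_sum
    by (intro sum.cong refl) (simp add: complex_norm_square[symmetric] mult.commute)
  hence "complex_of_real (\<Sum>x\<in>V. (cmod (f x))^2 * \<omega> x) = 0" using assms(1) by (simp only:)
  hence S0: "(\<Sum>x\<in>V. (cmod (f x))^2 * \<omega> x) = 0" by (simp only: of_real_eq_0_iff)
  have nn: "\<And>x. x \<in> V \<Longrightarrow> (cmod (f x))^2 * \<omega> x \<ge> 0" using wpos by (simp add: less_imp_le)
  have "\<forall>x\<in>V. (cmod (f x))^2 * \<omega> x = 0"
    using sum_nonneg_eq_0_iff[OF finV, of "\<lambda>x. (cmod (f x))^2 * \<omega> x"] nn S0 by simp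
  hence "(cmod (f x))^2 * \<omega> x = 0" using assms(2) by simp
  thus ?thesis using wpos[OF assms(2)] by simp
qed

lemma ip_scale_left: "ip (\<lambda>y. a * f y) g = cnj a * ip f g"
  unfolding ip_def by (simp add: sum_distrib_left mult_ac)
lemma ip_scale_right: "ip f (\<lambda>y. a * g y) = a * ip f g"
  unfolding ip_def by (simp add: sum_distrib_left mult_ac)
lemma ip_diff_left: "ip (\<lambda>y. f y - g y) h = ip f h - ip g h"
  unfolding ip_def by (simp add: sum_subtractf algebra_simps)
lemma ip_diff_right: "ip h (\<lambda>y. f y - g y) = ip h f - ip h g"
  unfolding ip_def by (simp add: sum_subtractf algebra_simps)

lemma Vs_eqI: "f \<in> Vs \<Longrightarrow> (\<And>x. x \<in> V \<Longrightarrow> f x = 0) \<Longrightarrow> f = (\<lambda>y. 0)"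
  unfolding Vs_def by auto

lemma eig_real:
  assumes "f \<in> Vs" "Top f = (\<lambda>y. a * f y)" "f \<noteq> (\<lambda>y. 0)"
  shows "cnj a = a"
proof -
  have "ip f f \<noteq> 0" using ip_self_zero Vs_eqI[OF assms(1)] assms(3) by blast
  have "cnj a * ip f f = a * ip f f"
    using ip_Top[of f f] unfolding assms(2) ip_scale_left ip_scale_right .
  thus ?thesis using \<open>ip f f \<noteq> 0\<close> by simp
qed

lemma eig_double:
  assumes "f \<in> Vs" "cnj a = a" "pa [:-a,1:] (pa [:-a,1:] f) = (\<lambda>y. 0)"
  shows "pa [:-a,1:] f = (\<lambda>y. 0)"
proof -
  define h where "h = pa [:-a,1:] f"
  have hV: "h \<in> Vs" unfolding h_def by (rule pa_Vs[OF assms(1)])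
  have "ip h h = ip f (pa [:-a,1:] h)"
    unfolding h_def pa_lin ip_diff_left ip_diff_right ip_scale_left ip_scale_right ip_Top
      Top_diff Top_scale
    using assms(2) by (simp add: algebra_simps)
  also have "\<dots> = 0" using assms(3) unfolding h_def ip_def by simp
  finally have "ip h h = 0" .
  thus ?thesis using Vs_eqI[OF hV] ip_self_zero unfolding h_def by blast
qed

end

lemma fsum_apply: "(\<Sum>i\<in>I. (F i :: 'b \<Rightarrow> 'c::comm_monoid_add)) y = (\<Sum>i\<in>I. F i y)"
  by (induction I rule: infinite_finite_induct) auto

context rev_op begin

lemma iter_Vs: "f \<in> Vs \<Longrightarrow> (Top ^^ k) f \<in> Vs"
  by (induction k) (auto simp: Top_Vs)

lemma iter_add: "(Top ^^ k) (\<lambda>y. f y + g y) = (\<lambda>y. (Top ^^ k) f y + (Top ^^ k) g y)"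
  by (induction k) (auto simp: Top_add)

lemma iter_scale: "(Top ^^ k) (\<lambda>y. a * f y) = (\<lambda>y. a * (Top ^^ k) f y)"
  by (induction k) (auto simp: Top_scale)

lemma iter_diff: "(Top ^^ k) (\<lambda>y. f y - g y) = (\<lambda>y. (Top ^^ k) f y - (Top ^^ k) g y)"
  by (induction k) (auto simp: Top_diff)

lemma pa_monom: "pa (monom c i) f = (\<lambda>y. c * (Top ^^ i) f y)"
proof (induction i)
  case 0 thus ?case by (simp add: monom_0 pa_const)
next
  case (Suc i)
  show ?case unfolding monom_Suc pa_pCons Suc by (simp add: Top_scale)
qed

lemma pa_sum: "pa (\<Sum>i\<in>I. p i) f = (\<lambda>y. \<Sum>i\<in>I. pa (p i) f y)"
  by (induction I rule: infinite_finite_induct) (auto simp: pa_add)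

lemma pa_diff: "pa (p - q) f = (\<lambda>y. pa p f y - pa q f y)"
proof -
  have "p - q = p + smult (-1) q" by simp
  hence "pa (p - q) f = pa (p + smult (-1) q) f" by simp
  thus ?thesis unfolding pa_add pa_smult by simp
qed

lemma annih:
  assumes fV: "f \<in> Vs" shows "\<exists>p. p \<noteq> 0 \<and> pa p f = (\<lambda>y. 0)"
proof (cases "inj_on (\<lambda>i. (Top ^^ i) f) {0..card V}")
  case False
  then obtain i j where ij: "i \<noteq> j" "(Top ^^ i) f = (Top ^^ j) f" unfolding inj_on_def by blast
  define p where "p = monom (1::complex) i - monom 1 j"
  have "coeff p i = 1" using ij by (simp add: p_def)
  hence "p \<noteq> 0" by auto
  moreover have "pa p f = (\<lambda>y. 0)" unfolding p_def pa_diff pa_monom using ij by simp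
  ultimately show ?thesis by blast
next
  case True
  interpret vs: vector_space "\<lambda>(c::complex) (g::'a \<Rightarrow> complex). \<lambda>y. c * g y"
    by unfold_locales (auto simp: fun_eq_iff algebra_simps)
  define e where "e x = (\<lambda>y::'a. if y = x then 1 else (0::complex))" for x :: 'a
  define S where "S = (\<lambda>i. (Top ^^ i) f) ` {0..card V}"
  have cS: "card S = Suc (card V)" unfolding S_def using card_image[OF True] by simp
  have "S \<subseteq> vs.span (e ` V)"
  proof
    fix g assume "g \<in> S"
    hence gV: "g \<in> Vs" unfolding S_def using iter_Vs[OF fV] by auto
    have "(\<Sum>x\<in>V. (\<lambda>y. g x * e x y)) \<in> vs.span (e ` V)"
      by (intro vs.span_sum vs.span_scale vs.span_base) auto
    moreover have "(\<Sum>x\<in>V. (\<lambda>y. g x * e x y)) = g"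
    proof
      fix y
      show "(\<Sum>x\<in>V. (\<lambda>y. g x * e x y)) y = g y"
        unfolding fsum_apply e_def using gV finV by (cases "y \<in> V") (auto simp: Vs_def if_distrib cong: if_cong)
    qed
    ultimately show "g \<in> vs.span (e ` V)" by simp
  qed
  have "vs.dependent S"
  proof (rule ccontr)
    assume "vs.independent S"
    from vs.independent_span_bound[OF _ this \<open>S \<subseteq> _\<close>] finV
    have "card S \<le> card (e ` V)" by auto
    also have "\<dots> \<le> card V" by (rule card_image_le[OF finV])
    finally show False using cS by simp
  qed
  then obtain t u where t: "finite t" "t \<subseteq> S" "(\<Sum>v\<in>t. (\<lambda>y. u v * v y)) = 0"
    and v0: "\<exists>v\<in>t. u v \<noteq> 0"
    unfolding vs.dependent_explicit by blast
  define I where "I = {i\<in>{0..card V}. (Top ^^ i) f \<in> t}"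
  have tI: "t = (\<lambda>i. (Top ^^ i) f) ` I" unfolding I_def using t(2) unfolding S_def by auto
  have injI: "inj_on (\<lambda>i. (Top ^^ i) f) I" using True by (rule inj_on_subset) (auto simp: I_def)
  define p where "p = (\<Sum>i\<in>I. monom (u ((Top ^^ i) f)) i)"
  have "pa p f = (\<lambda>y. \<Sum>i\<in>I. u ((Top ^^ i) f) * (Top ^^ i) f y)"
    unfolding p_def pa_sum pa_monom by simp
  also have "\<dots> = (\<lambda>y. \<Sum>v\<in>t. u v * v y)"
    unfolding tI by (subst sum.reindex[OF injI]) simp
  also have "\<dots> = (\<lambda>y. 0)"
  proof
    fix y
    have "(\<Sum>v\<in>t. (\<lambda>y. u v * v y)) y = 0" using t(3) by simp
    thus "(\<Sum>v\<in>t. u v * v y) = 0" unfolding fsum_apply .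
  qed
  finally have pa0: "pa p f = (\<lambda>y. 0)" .
  obtain v where "v \<in> t" "u v \<noteq> 0" using v0 by blast
  then obtain i0 where i0: "i0 \<in> I" "v = (Top ^^ i0) f" unfolding tI by auto
  have fI: "finite I" unfolding I_def by simp
  have "coeff p i0 = (\<Sum>i\<in>I. if i = i0 then u ((Top ^^ i) f) else 0)"
    unfolding p_def coeff_sum coeff_monom by (intro sum.cong refl)
  also have "\<dots> = u v" using i0 fI by simp
  finally have "p \<noteq> 0" using \<open>u v \<noteq> 0\<close> by auto
  with pa0 show ?thesis by blast
qed

end

context rev_op begin

lemma iter_zero: "(Top ^^ k) (\<lambda>y. 0) = (\<lambda>y. 0)"
  by (induction k) (auto simp: Top_zero)

lemma diag:
  assumes "finite Z" "f \<in> Vs" "pa (\<Prod>z\<in>Z. [:-z,1:]) f = (\<lambda>y. 0)"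
  shows "\<exists>w. \<forall>k y. (Top ^^ k) f y = (\<Sum>z\<in>Z. z ^ k * w z y)"
  using assms
proof (induction Z arbitrary: f rule: finite_induct)
  case empty
  hence "f = (\<lambda>y. 0)" using pa_one by simp
  thus ?case by (simp add: iter_zero)
next
  case (insert z Z f)
  define f' where "f' = pa [:-z,1:] f"
  have f'V: "f' \<in> Vs" unfolding f'_def by (rule pa_Vs[OF insert.prems(1)])
  have "pa (\<Prod>z\<in>Z. [:-z,1:]) f' = pa ((\<Prod>z\<in>Z. [:-z,1:]) * [:-z,1:]) f"
    unfolding f'_def pa_mult ..
  also have "(\<Prod>z\<in>Z. [:-z,1:]) * [:-z,1:] = (\<Prod>z\<in>insert z Z. [:-z,1:])"
    using insert.hyps by (simp add: mult.commute)
  finally have "pa (\<Prod>z\<in>Z. [:-z,1:]) f' = (\<lambda>y. 0)" using insert.prems(2) by simp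
  from insert.IH[OF f'V this] obtain w' where
    w': "\<And>k y. (Top ^^ k) f' y = (\<Sum>z\<in>Z. z ^ k * w' z y)" by blast
  have rec: "(Top ^^ Suc k) f y = z * (Top ^^ k) f y + (\<Sum>z'\<in>Z. z' ^ k * w' z' y)" for k y
  proof -
    have "(Top ^^ k) f' y = (Top ^^ Suc k) f y - z * (Top ^^ k) f y"
      unfolding f'_def pa_lin iter_diff iter_scale by (simp add: funpow_Suc_right del: funpow.simps)
    thus ?thesis using w'[of k y] by (simp add: algebra_simps)
  qed
  define A where "A y = f y - (\<Sum>z'\<in>Z. w' z' y / (z' - z))" for y
  have claim: "(Top ^^ k) f y = z ^ k * A y + (\<Sum>z'\<in>Z. z' ^ k * (w' z' y / (z' - z)))" for k y
  proof (induction k)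
    case 0 thus ?case by (simp add: A_def)
  next
    case (Suc k)
    have "(Top ^^ Suc k) f y = z * (z ^ k * A y + (\<Sum>z'\<in>Z. z' ^ k * (w' z' y / (z' - z))))
            + (\<Sum>z'\<in>Z. z' ^ k * w' z' y)" using rec Suc by simp
    also have "\<dots> = z ^ Suc k * A y + (\<Sum>z'\<in>Z. z * (z' ^ k * (w' z' y / (z' - z))) + z' ^ k * w' z' y)"
      by (simp add: sum_distrib_left sum.distrib algebra_simps)
    also have "(\<Sum>z'\<in>Z. z * (z' ^ k * (w' z' y / (z' - z))) + z' ^ k * w' z' y)
             = (\<Sum>z'\<in>Z. z' ^ Suc k * (w' z' y / (z' - z)))"
    proof (intro sum.cong refl)
      fix z' assume "z' \<in> Z"
      hence "z' - z \<noteq> 0" using insert.hyps by auto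
      thus "z * (z' ^ k * (w' z' y / (z' - z))) + z' ^ k * w' z' y = z' ^ Suc k * (w' z' y / (z' - z))"
        by (simp add: field_simps)
    qed
    finally show ?case .
  qed
  define w where "w \<zeta> = (if \<zeta> = z then A else (\<lambda>y. w' \<zeta> y / (\<zeta> - z)))" for \<zeta>
  have "(Top ^^ k) f y = (\<Sum>\<zeta>\<in>insert z Z. \<zeta> ^ k * w \<zeta> y)" for k y
  proof -
    have "(\<Sum>\<zeta>\<in>Z. \<zeta> ^ k * w \<zeta> y) = (\<Sum>z'\<in>Z. z' ^ k * (w' z' y / (z' - z)))"
      using insert.hyps by (intro sum.cong refl) (auto simp: w_def)
    thus ?thesis using insert.hyps claim[of k y] by (simp add: w_def)
  qed
  thus ?case by blast
qed

lemma reduce: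
  "degree p = n \<Longrightarrow> p \<noteq> 0 \<Longrightarrow> f \<in> Vs \<Longrightarrow> pa p f = (\<lambda>y. 0) \<Longrightarrow>
   \<exists>Z. finite Z \<and> (\<forall>z\<in>Z. cnj z = z) \<and> pa (\<Prod>z\<in>Z. [:-z,1:]) f = (\<lambda>y. 0)"
proof (induction n arbitrary: p f rule: less_induct)
  case (less n p f)
  show ?case
  proof (cases "degree p = 0")
    case True
    then obtain c where pc: "p = [:c:]" using degree0_coeffs by blast
    hence "c \<noteq> 0" using less.prems by auto
    hence "f = (\<lambda>y. 0)" using less.prems(4) unfolding pc pa_const by (auto simp: fun_eq_iff)
    thus ?thesis by (intro exI[of _ "{}"]) (simp add: pa_one)
  next
    case False
    hence "\<not> constant (poly p)" using constant_degree[of p] by simp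
    then obtain a where "poly p a = 0" using fundamental_theorem_of_algebra by blast
    then obtain q where pq: "p = [:-a,1:] * q" using poly_eq_0_iff_dvd by (metis dvdE)
    have q0: "q \<noteq> 0" using less.prems(2) pq by auto
    have "degree p = degree [:-a,1:] + degree q" unfolding pq using q0
      by (intro degree_mult_eq) auto
    hence dq: "degree q < n" using less.prems(1) by simp
    define f' where "f' = pa [:-a,1:] f"
    have f'V: "f' \<in> Vs" unfolding f'_def by (rule pa_Vs[OF less.prems(3)])
    have "pa q f' = pa p f" unfolding f'_def pa_mult[symmetric] pq by (simp add: mult.commute)
    hence "pa q f' = (\<lambda>y. 0)" using less.prems(4) by simp
    from less.IH[OF dq refl q0 f'V this] obtain Z' where
      Z': "finite Z'" "\<forall>z\<in>Z'. cnj z = z" "pa (\<Prod>z\<in>Z'. [:-z,1:]) f' = (\<lambda>y. 0)" by blast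
    define g where "g = pa q f"
    have gV: "g \<in> Vs" unfolding g_def by (rule pa_Vs[OF less.prems(3)])
    show ?thesis
    proof (cases "g = (\<lambda>y. 0)")
      case True
      thus ?thesis using less.IH[OF dq refl q0 less.prems(3)] unfolding g_def by blast
    next
      case False
      have "pa [:-a,1:] g = (\<lambda>y. 0)" unfolding g_def pa_mult[symmetric] pq[symmetric] by fact
      hence "Top g = (\<lambda>y. a * g y)" unfolding pa_lin by (auto simp: fun_eq_iff)
      hence ar: "cnj a = a" using eig_real[OF gV _ False] by blast
      have P: "pa ((\<Prod>z\<in>Z'. [:-z,1:]) * [:-a,1:]) f = (\<lambda>y. 0)"
        unfolding pa_mult using Z'(3) f'_def by simp
      show ?thesis
      proof (cases "a \<in> Z'")
        case False
        have "(\<Prod>z\<in>insert a Z'. [:-z,1:]) = (\<Prod>z\<in>Z'. [:-z,1:]) * [:-a,1:]"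
          using False Z'(1) by (simp add: mult.commute)
        thus ?thesis using P Z' ar by (intro exI[of _ "insert a Z'"]) auto
      next
        case True
        define h where "h = pa (\<Prod>z\<in>Z'-{a}. [:-z,1:]) f"
        have hV: "h \<in> Vs" unfolding h_def by (rule pa_Vs[OF less.prems(3)])
        have split: "(\<Prod>z\<in>Z'. [:-z,1:]) = [:-a,1:] * (\<Prod>z\<in>Z'-{a}. [:-z,1:])"
          using True Z'(1) by (simp add: prod.remove)
        have "pa [:-a,1:] (pa [:-a,1:] h) = pa ((\<Prod>z\<in>Z'. [:-z,1:]) * [:-a,1:]) f"
          unfolding h_def pa_mult[symmetric] split by (simp add: mult_ac)
        hence "pa [:-a,1:] (pa [:-a,1:] h) = (\<lambda>y. 0)" using P by simp
        from eig_double[OF hV ar this] have "pa [:-a,1:] h = (\<lambda>y. 0)" .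
        hence "pa (\<Prod>z\<in>Z'. [:-z,1:]) f = (\<lambda>y. 0)"
          unfolding split pa_mult h_def .
        thus ?thesis using Z' by blast
      qed
    qed
  qed
qed

lemma spectral:
  assumes "f \<in> Vs"
  shows "\<exists>Z w. finite Z \<and> (\<forall>z\<in>Z. cnj z = z) \<and> (\<forall>k y. (Top ^^ k) f y = (\<Sum>z\<in>Z. z ^ k * w z y))"
proof -
  obtain p where "p \<noteq> 0" "pa p f = (\<lambda>y. 0)" using annih[OF assms] by blast
  from reduce[OF refl this(1) assms this(2)] obtain Z where
    "finite Z" "\<forall>z\<in>Z. cnj z = z" "pa (\<Prod>z\<in>Z. [:-z,1:]) f = (\<lambda>y. 0)" by blast
  with diag[OF this(1) assms this(3)] show ?thesis by blast
qed

end

lemma group_sum: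
  assumes "finite Z"
  shows "(\<Sum>z\<in>Z. d z * (b z :: real) ^ k) = (\<Sum>r\<in>b ` Z. (\<Sum>z\<in>{z. z \<in> Z \<and> b z = r}. d z) * r ^ k)"
proof -
  have "(\<Sum>z\<in>Z. d z * b z ^ k) = (\<Sum>r\<in>b ` Z. \<Sum>z\<in>{z. z \<in> Z \<and> b z = r}. d z * b z ^ k)"
    using sum.image_gen[OF assms, of "\<lambda>z. d z * b z ^ k" b] by simp
  also have "\<dots> = (\<Sum>r\<in>b ` Z. (\<Sum>z\<in>{z. z \<in> Z \<and> b z = r}. d z) * r ^ k)"
    unfolding sum_distrib_right by (intro sum.cong refl) auto
  finally show ?thesis .
qed

lemma simple_finite: "simple_graph V E \<Longrightarrow> finite V" unfolding simple_graph_def by auto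

lemma tp_nonneg: "0 \<le> g \<Longrightarrow> g \<le> 1 \<Longrightarrow> trans_prob V E g x y \<ge> 0"
  unfolding trans_prob_def by auto

lemma deg_pos: "simple_graph V E \<Longrightarrow> E x y \<Longrightarrow> deg V E x \<ge> 1"
proof -
  assume sg: "simple_graph V E" and e: "E x y"
  hence "y \<in> {y \<in> V. E x y}" unfolding simple_graph_def by auto
  moreover have "finite {y \<in> V. E x y}" using simple_finite[OF sg] by auto
  ultimately have "card {y \<in> V. E x y} \<noteq> 0" by (metis card_0_eq empty_iff)
  thus ?thesis unfolding deg_def by simp
qed

lemma tp_sum:
  assumes sg: "simple_graph V E" and x: "x \<in> V"
  shows "(\<Sum>y\<in>V. trans_prob V E g x y) = 1"
proof -
  have fV: "finite V" using simple_finite[OF sg] .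
  have irr: "\<not> E x x" using sg unfolding simple_graph_def by auto
  have "(\<Sum>y\<in>V. trans_prob V E g x y) = trans_prob V E g x x + (\<Sum>y\<in>V-{x}. trans_prob V E g x y)"
    using fV x by (simp add: sum.remove)
  also have "(\<Sum>y\<in>V-{x}. trans_prob V E g x y) = (\<Sum>y\<in>V-{x}. if E x y then (1 - g) / real (deg V E x) else 0)"
    unfolding trans_prob_def by (intro sum.cong refl) auto
  also have "\<dots> = (\<Sum>y\<in>{y\<in>V. E x y}. (1 - g) / real (deg V E x))"
    using fV irr by (intro sum.mono_neutral_cong_right) auto
  also have "\<dots> = real (deg V E x) * ((1 - g) / real (deg V E x))"
    by (simp add: deg_def)
  finally show ?thesis
    by (cases "deg V E x = 0") (auto simp: trans_prob_def)
qed

lemma walk_nonneg: "0 \<le> g \<Longrightarrow> g \<le> 1 \<Longrightarrow> walk_dist V E g w k y \<ge> 0"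
  by (induction k arbitrary: y) (auto intro!: sum_nonneg mult_nonneg_nonneg tp_nonneg)

lemma walk_sum:
  assumes sg: "simple_graph V E" and w: "w \<in> V"
  shows "(\<Sum>y\<in>V. walk_dist V E g w k y) = 1"
proof (induction k)
  case 0 thus ?case using w simple_finite[OF sg] by simp
next
  case (Suc k)
  have "(\<Sum>y\<in>V. walk_dist V E g w (Suc k) y) = (\<Sum>x\<in>V. walk_dist V E g w k x * (\<Sum>y\<in>V. trans_prob V E g x y))"
    by (simp add: sum_distrib_left) (rule sum.swap)
  also have "\<dots> = (\<Sum>x\<in>V. walk_dist V E g w k x)" using tp_sum[OF sg] by simp
  finally show ?case using Suc by simp
qed

lemma rev_walk:
  assumes sg: "simple_graph V E"
  shows "rev_op V (trans_prob V E g) (\<lambda>x. 1 / real (max 1 (deg V E x)))"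
proof
  show "finite V" using simple_finite[OF sg] .
  show "0 < 1 / real (max 1 (deg V E x))" for x by simp
  fix x y assume "x \<in> V" "y \<in> V"
  show "trans_prob V E g x y * (1 / real (max 1 (deg V E y))) =
        trans_prob V E g y x * (1 / real (max 1 (deg V E x)))"
  proof (cases "x = y")
    case True thus ?thesis by simp
  next
    case False
    have sym: "E x y \<longleftrightarrow> E y x" using sg unfolding simple_graph_def by blast
    show ?thesis
    proof (cases "E x y")
      case True
      hence "deg V E x \<ge> 1" "deg V E y \<ge> 1" using deg_pos[OF sg] sym by blast+
      thus ?thesis using True sym False unfolding trans_prob_def
        by (simp add: max_def)
    next
      case False
      thus ?thesis using sym \<open>x \<noteq> y\<close> unfolding trans_prob_def by simp
    qed
  qed
qed

lemma walk_even:
  assumes sg: "simple_graph V E" and w: "w \<in> V"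
  shows "\<exists>R c. finite R \<and> R \<subseteq> {0..} \<and>
           (\<forall>k. \<forall>y\<in>V. walk_dist V E g w (2 * k) y = (\<Sum>r\<in>R. c r y * r ^ k))"
proof -
  interpret rev_op V "trans_prob V E g" "\<lambda>x. 1 / real (max 1 (deg V E x))"
    by (rule rev_walk[OF sg])
  define f0 where "f0 = (\<lambda>y. if y = w then 1 else (0::complex))"
  have f0V: "f0 \<in> Vs" unfolding f0_def Vs_def using w by auto
  have wT: "complex_of_real (walk_dist V E g w k y) = (Top ^^ k) f0 y" if "y \<in> V" for k y
    using that
  proof (induction k arbitrary: y)
    case 0 thus ?case by (simp add: f0_def)
  next
    case (Suc k)
    have "(Top ^^ Suc k) f0 y = (\<Sum>x\<in>V. (Top ^^ k) f0 x * of_real (trans_prob V E g x y))"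
      using Suc.prems by (simp add: Top_def)
    also have "\<dots> = (\<Sum>x\<in>V. complex_of_real (walk_dist V E g w k x * trans_prob V E g x y))"
      using Suc.IH by (intro sum.cong refl) simp
    finally show ?case by simp
  qed
  obtain Z w' where Z: "finite Z" "\<forall>z\<in>Z. cnj z = z"
    and sp: "\<And>k y. (Top ^^ k) f0 y = (\<Sum>z\<in>Z. z ^ k * w' z y)"
    using spectral[OF f0V] by blast
  have zr: "z = complex_of_real (Re z)" if "z \<in> Z" for z
  proof -
    have "Im z = 0" using Z(2) that by (simp add: complex_eq_iff)
    thus ?thesis by (simp add: complex_eq_iff)
  qed
  have eq: "walk_dist V E g w (2 * k) y = (\<Sum>z\<in>Z. Re (w' z y) * ((Re z)^2) ^ k)" if "y \<in> V" for k y
  proof -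
    have "walk_dist V E g w (2 * k) y = Re ((Top ^^ (2 * k)) f0 y)"
      unfolding wT[OF that, symmetric] by simp
    also have "\<dots> = (\<Sum>z\<in>Z. Re (z ^ (2 * k) * w' z y))" unfolding sp Re_sum ..
    also have "\<dots> = (\<Sum>z\<in>Z. Re (w' z y) * ((Re z)^2) ^ k)"
    proof (intro sum.cong refl)
      fix z assume "z \<in> Z"
      hence "z ^ (2 * k) = complex_of_real (Re z) ^ (2 * k)" using zr by simp
      also have "\<dots> = complex_of_real (((Re z)^2) ^ k)" by (simp add: power_mult)
      finally have "z ^ (2 * k) = complex_of_real (((Re z)^2) ^ k)" .
      thus "Re (z ^ (2 * k) * w' z y) = Re (w' z y) * ((Re z)^2) ^ k"
        by (simp add: mult.commute)
    qed
    finally show ?thesis .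
  qed
  define R where "R = (\<lambda>z. (Re z)^2) ` Z"
  define c where "c r y = (\<Sum>z\<in>{z. z \<in> Z \<and> (Re z)^2 = r}. Re (w' z y))" for r y
  have "walk_dist V E g w (2 * k) y = (\<Sum>r\<in>R. c r y * r ^ k)" if "y \<in> V" for k y
    unfolding eq[OF that] R_def c_def by (rule group_sum[OF Z(1)])
  moreover have "finite R" "R \<subseteq> {0..}" unfolding R_def using Z(1) by auto
  ultimately show ?thesis by blast
qed

definition marg :: "'a set \<Rightarrow> ('a \<times> 'a \<Rightarrow> real) \<Rightarrow> (bool \<times> 'a \<Rightarrow> real)" where
  "marg V \<pi> = (\<lambda>(t, x). if x \<in> V then (if t then (\<Sum>y\<in>V. \<pi> (x, y)) else (\<Sum>y\<in>V. \<pi> (y, x))) else 0)"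

definition bvec :: "'a set \<Rightarrow> ('a \<Rightarrow> real) \<Rightarrow> ('a \<Rightarrow> real) \<Rightarrow> (bool \<times> 'a \<Rightarrow> real)" where
  "bvec V \<mu> \<nu> = (\<lambda>(t, x). if x \<in> V then (if t then \<mu> x else \<nu> x) else 0)"

definition cost :: "'a set \<Rightarrow> ('a \<Rightarrow> 'a \<Rightarrow> bool) \<Rightarrow> ('a \<times> 'a \<Rightarrow> real) \<Rightarrow> real" where
  "cost V E \<pi> = (\<Sum>x\<in>V. \<Sum>y\<in>V. \<pi> (x, y) * real (graph_dist E x y))"

definition cpl :: "'a set \<Rightarrow> ('a \<Rightarrow> real) \<Rightarrow> ('a \<Rightarrow> real) \<Rightarrow> ('a \<times> 'a \<Rightarrow> real) \<Rightarrow> bool" where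
  "cpl V \<mu> \<nu> \<pi> \<longleftrightarrow> (\<forall>x\<in>V. \<forall>y\<in>V. \<pi> (x, y) \<ge> 0) \<and> marg V \<pi> = bvec V \<mu> \<nu>"

definition U :: "('a \<times> 'a) set \<Rightarrow> ('a \<times> 'a \<Rightarrow> real) set" where
  "U S = {\<pi>. \<forall>p. p \<notin> S \<longrightarrow> \<pi> p = 0}"

interpretation vsp: vector_space_pair "\<lambda>(c::real) (f::'a \<times> 'a \<Rightarrow> real) x. c * f x"
  "\<lambda>(c::real) (f::bool \<times> 'a \<Rightarrow> real) x. c * f x"
  by unfold_locales (auto simp: fun_eq_iff algebra_simps)

lemma marg_lin: "marg V (\<lambda>p. a p + c * b p) = (\<lambda>q. marg V a q + c * marg V b q)"
  unfolding marg_def by (auto simp: sum.distrib sum_distrib_left fun_eq_iff)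

lemma linear_marg: "Vector_Spaces.linear (\<lambda>(c::real) (f::'a \<times> 'a \<Rightarrow> real) x. c * f x)
  (\<lambda>(c::real) (f::bool \<times> 'a \<Rightarrow> real) x. c * f x) (marg V)"
  unfolding Vector_Spaces.linear_iff
proof (intro conjI allI)
  show "marg V (x + y) = marg V x + marg V y" for x y
    using marg_lin[of V x 1 y] by (simp add: plus_fun_def)
  show "marg V (\<lambda>x. c * b x) = (\<lambda>q. c * marg V b q)" for c b
    using marg_lin[of V "\<lambda>_. 0" c b] by (simp add: marg_def fun_eq_iff)
qed (unfold_locales; auto simp: fun_eq_iff algebra_simps)+

lemma subspace_U: "vsp.vs1.subspace (U S)"
  unfolding vsp.vs1.subspace_def U_def by auto

definition Gs :: "'a set \<Rightarrow> ('a \<times> 'a) set \<Rightarrow> (bool \<times> 'a \<Rightarrow> real) \<Rightarrow> ('a \<times> 'a \<Rightarrow> real)" where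
  "Gs V S = (SOME G. Vector_Spaces.linear (\<lambda>(c::real) (f::bool \<times> 'a \<Rightarrow> real) x. c * f x)
      (\<lambda>(c::real) (f::'a \<times> 'a \<Rightarrow> real) x. c * f x) G \<and> (\<forall>\<pi>\<in>U S. G (marg V \<pi>) = \<pi>))"

lemma Gs_prop:
  assumes "inj_on (marg V) (U S)"
  shows "Vector_Spaces.linear (\<lambda>(c::real) (f::bool \<times> 'a \<Rightarrow> real) x. c * f x)
      (\<lambda>(c::real) (f::'a \<times> 'a \<Rightarrow> real) x. c * f x) (Gs V S) \<and> (\<forall>\<pi>\<in>U S. Gs V S (marg V \<pi>) = \<pi>)"
proof -
  have "\<exists>G. Vector_Spaces.linear (\<lambda>(c::real) (f::bool \<times> 'a \<Rightarrow> real) x. c * f x)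
      (\<lambda>(c::real) (f::'a \<times> 'a \<Rightarrow> real) x. c * f x) G \<and> (\<forall>\<pi>\<in>U S. G (marg V \<pi>) = \<pi>)"
    using vsp.linear_exists_left_inverse_on[OF linear_marg subspace_U assms] by blast
  from someI_ex[OF this] show ?thesis unfolding Gs_def .
qed

lemma cost_lin: "cost V E (\<lambda>p. a p + c * b p) = cost V E a + c * cost V E b"
  unfolding cost_def by (simp add: algebra_simps sum.distrib sum_distrib_left)

lemma basic:
  assumes fV: "finite V"
  shows "cpl V \<mu> \<nu> \<pi> \<Longrightarrow> \<pi> \<in> U (V \<times> V) \<Longrightarrow>
    \<exists>S. S \<subseteq> V \<times> V \<and> inj_on (marg V) (U S) \<and> cpl V \<mu> \<nu> (Gs V S (bvec V \<mu> \<nu>)) \<and>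
        cost V E (Gs V S (bvec V \<mu> \<nu>)) \<le> cost V E \<pi>"
proof (induction "card {p\<in>V \<times> V. \<pi> p \<noteq> 0}" arbitrary: \<pi> rule: less_induct)
  case less
  note cp = less.prems(1) and \<pi>U = less.prems(2)
  define S where "S = {p\<in>V \<times> V. \<pi> p \<noteq> 0}"
  have SV: "S \<subseteq> V \<times> V" unfolding S_def by auto
  have fS: "finite S" using fV SV finite_subset by blast
  have \<pi>S: "\<pi> \<in> U S" using \<pi>U unfolding U_def S_def by auto
  have \<pi>nn: "\<pi> p \<ge> 0" if "p \<in> V \<times> V" for p using cp that unfolding cpl_def by auto
  have mb: "marg V \<pi> = bvec V \<mu> \<nu>" using cp unfolding cpl_def by auto
  show ?case
  proof (cases "inj_on (marg V) (U S)")
    case True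
    have "Gs V S (bvec V \<mu> \<nu>) = \<pi>" using Gs_prop[OF True] \<pi>S mb by metis
    thus ?thesis using True SV cp by auto
  next
    case False
    then obtain \<pi>1 \<pi>2 where p12: "\<pi>1 \<in> U S" "\<pi>2 \<in> U S" "\<pi>1 \<noteq> \<pi>2" "marg V \<pi>1 = marg V \<pi>2"
      unfolding inj_on_def by blast
    define d0 where "d0 = (\<lambda>p. \<pi>1 p + (-1) * \<pi>2 p)"
    have md0: "marg V d0 = (\<lambda>q. 0)" unfolding d0_def marg_lin p12(4) by simp
    have d0U: "d0 \<in> U S" using p12 unfolding U_def d0_def by auto
    have d0nz: "d0 \<noteq> (\<lambda>p. 0)" using p12(3) unfolding d0_def by (auto simp: fun_eq_iff)
    define d where "d = (if cost V E d0 \<le> 0 then d0 else (\<lambda>p. 0 + (-1) * d0 p))"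
    have mz: "marg V (\<lambda>p. 0) = (\<lambda>q. 0)" unfolding marg_def by (auto simp: fun_eq_iff)
    have md: "marg V d = (\<lambda>q. 0)"
      unfolding d_def using md0 marg_lin[of V "\<lambda>p. 0" "-1" d0] mz by auto
    have dU: "d \<in> U S" using d0U unfolding U_def d_def by auto
    have dnz: "d \<noteq> (\<lambda>p. 0)" using d0nz unfolding d_def by (auto simp: fun_eq_iff)
    have cd: "cost V E d \<le> 0"
      unfolding d_def using cost_lin[of V E "\<lambda>p. 0" "-1" d0] by (auto simp: cost_def)
    have "\<exists>p\<in>S. d p < 0"
    proof (rule ccontr)
      assume "\<not> (\<exists>p\<in>S. d p < 0)"
      have dnn: "\<forall>p\<in>V \<times> V. d p \<ge> 0"
      proof
        fix p assume "p \<in> V \<times> V"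
        show "d p \<ge> 0"
        proof (cases "p \<in> S")
          case True thus ?thesis using \<open>\<not> (\<exists>p\<in>S. d p < 0)\<close> by (simp add: not_less)
        next
          case False
          have "d p = 0" using dU False unfolding U_def by blast
          thus ?thesis by simp
        qed
      qed
      have "(\<Sum>p\<in>V \<times> V. d p) = (\<Sum>x\<in>V. \<Sum>y\<in>V. d (x, y))"
        by (simp add: sum.cartesian_product)
      also have "\<dots> = (\<Sum>x\<in>V. marg V d (True, x))" unfolding marg_def by simp
      also have "\<dots> = 0" using md by simp
      finally have "(\<Sum>p\<in>V \<times> V. d p) = 0" .
      hence "\<forall>p\<in>V \<times> V. d p = 0" using sum_nonneg_eq_0_iff[of "V \<times> V" d] fV dnn by auto
      hence "d = (\<lambda>p. 0)" using dU SV unfolding U_def by (force simp: fun_eq_iff)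
      thus False using dnz by simp
    qed
    define N where "N = {p\<in>S. d p < 0}"
    have fN: "finite N" "N \<noteq> {}" unfolding N_def using fS \<open>\<exists>p\<in>S. d p < 0\<close> by auto
    define t where "t = Min ((\<lambda>p. \<pi> p / - d p) ` N)"
    have "t \<in> (\<lambda>p. \<pi> p / - d p) ` N" unfolding t_def using fN by (intro Min_in) auto
    then obtain p0 where p0: "p0 \<in> N" "t = \<pi> p0 / - d p0" by blast
    have tle: "t \<le> \<pi> p / - d p" if "p \<in> N" for p unfolding t_def using fN that by simp
    have "\<pi> p0 > 0" using p0(1) \<pi>nn[of p0] unfolding N_def S_def by force
    moreover have "d p0 < 0" using p0(1) unfolding N_def by auto
    ultimately have tpos: "t > 0" using p0(2) by (simp add: divide_pos_neg)
    define \<pi>' where "\<pi>' = (\<lambda>p. \<pi> p + t * d p)"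
    have cp': "cpl V \<mu> \<nu> \<pi>'"
      unfolding cpl_def
    proof (intro conjI ballI)
      fix x y assume xy: "x \<in> V" "y \<in> V"
      show "0 \<le> \<pi>' (x, y)"
      proof (cases "d (x, y) < 0")
        case True
        hence "(x, y) \<in> S" using dU unfolding U_def by force
        hence xyN: "(x, y) \<in> N" using True unfolding N_def by auto
        have "t * (- d (x, y)) \<le> (\<pi> (x, y) / - d (x, y)) * (- d (x, y))"
          using tle[OF xyN] True by (intro mult_right_mono) auto
        also have "\<dots> = \<pi> (x, y)" using True by simp
        finally have "t * (- d (x, y)) \<le> \<pi> (x, y)" .
        thus ?thesis unfolding \<pi>'_def by simp
      next
        case False
        thus ?thesis unfolding \<pi>'_def using \<pi>nn[of "(x, y)"] xy tpos by simp
      qed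
    next
      show "marg V \<pi>' = bvec V \<mu> \<nu>" unfolding \<pi>'_def marg_lin md mb by simp
    qed
    have \<pi>'U: "\<pi>' \<in> U (V \<times> V)"
    proof -
      have "d p = 0" if "p \<notin> V \<times> V" for p using dU SV that unfolding U_def by blast
      moreover have "\<pi> p = 0" if "p \<notin> V \<times> V" for p using \<pi>U that unfolding U_def by blast
      ultimately show ?thesis unfolding U_def \<pi>'_def by simp
    qed
    have cost': "cost V E \<pi>' \<le> cost V E \<pi>"
      unfolding \<pi>'_def cost_lin using tpos cd by (simp add: mult_nonneg_nonpos)
    have sub: "{p\<in>V \<times> V. \<pi>' p \<noteq> 0} \<subseteq> S - {p0}"
    proof
      fix p assume p: "p \<in> {p\<in>V \<times> V. \<pi>' p \<noteq> 0}"
      have "p \<in> S"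
      proof (rule ccontr)
        assume "p \<notin> S"
        hence "\<pi> p = 0" "d p = 0" using \<pi>S dU unfolding U_def by blast+
        thus False using p unfolding \<pi>'_def by simp
      qed
      moreover have "p \<noteq> p0"
      proof
        assume "p = p0"
        have "\<pi>' p0 = 0" unfolding \<pi>'_def p0(2) using \<open>d p0 < 0\<close> by simp
        thus False using p \<open>p = p0\<close> by simp
      qed
      ultimately show "p \<in> S - {p0}" by simp
    qed
    have "p0 \<in> S" using p0(1) unfolding N_def by simp
    hence "{p\<in>V \<times> V. \<pi>' p \<noteq> 0} \<subset> S" using sub by blast
    hence "card {p\<in>V \<times> V. \<pi>' p \<noteq> 0} < card S" by (rule psubset_card_mono[OF fS])
    from less.hyps[OF this[unfolded S_def] cp' \<pi>'U] obtain S' where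
      "S' \<subseteq> V \<times> V" "inj_on (marg V) (U S')" "cpl V \<mu> \<nu> (Gs V S' (bvec V \<mu> \<nu>))"
      "cost V E (Gs V S' (bvec V \<mu> \<nu>)) \<le> cost V E \<pi>'" by blast
    thus ?thesis using cost' by (meson order_trans)
  qed
qed

definition rst :: "'a set \<Rightarrow> ('a \<Rightarrow> 'a \<Rightarrow> real) \<Rightarrow> ('a \<times> 'a \<Rightarrow> real)" where
  "rst V \<pi> = (\<lambda>p. if p \<in> V \<times> V then \<pi> (fst p) (snd p) else 0)"

lemma coupling_cpl:
  assumes "coupling V \<mu> \<nu> \<pi>"
  shows "cpl V \<mu> \<nu> (rst V \<pi>)" "rst V \<pi> \<in> U (V \<times> V)"
    "cost V E (rst V \<pi>) = (\<Sum>x\<in>V. \<Sum>y\<in>V. \<pi> x y * real (graph_dist E x y))"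
proof -
  show "cpl V \<mu> \<nu> (rst V \<pi>)"
    using assms unfolding cpl_def coupling_def rst_def marg_def bvec_def
    by (auto simp: fun_eq_iff)
  show "rst V \<pi> \<in> U (V \<times> V)" unfolding U_def rst_def by auto
  show "cost V E (rst V \<pi>) = (\<Sum>x\<in>V. \<Sum>y\<in>V. \<pi> x y * real (graph_dist E x y))"
    unfolding cost_def rst_def by simp
qed

lemma cpl_coupling:
  assumes "cpl V \<mu> \<nu> \<pi>"
  shows "coupling V \<mu> \<nu> (\<lambda>x y. \<pi> (x, y))"
proof -
  have m: "marg V \<pi> (t, x) = bvec V \<mu> \<nu> (t, x)" for t x using assms unfolding cpl_def by simp
  show ?thesis unfolding coupling_def
  proof (intro conjI ballI)
    fix x y assume "x \<in> V" "y \<in> V" thus "0 \<le> \<pi> (x, y)" using assms unfolding cpl_def by auto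
  next
    fix x assume "x \<in> V" thus "(\<Sum>y\<in>V. \<pi> (x, y)) = \<mu> x" using m[of True x] by (simp add: marg_def bvec_def)
  next
    fix y assume "y \<in> V" thus "(\<Sum>x\<in>V. \<pi> (x, y)) = \<nu> y" using m[of False y] by (simp add: marg_def bvec_def)
  qed
qed

lemma cost_nonneg: "cpl V \<mu> \<nu> \<pi> \<Longrightarrow> cost V E \<pi> \<ge> 0"
  unfolding cpl_def cost_def by (auto intro!: sum_nonneg mult_nonneg_nonneg)

definition SS :: "'a set \<Rightarrow> ('a \<times> 'a) set set" where
  "SS V = {S. S \<subseteq> V \<times> V \<and> inj_on (marg V) (U S)}"

lemma finite_SS: "finite V \<Longrightarrow> finite (SS V)"
  unfolding SS_def by (rule finite_subset[of _ "Pow (V \<times> V)"]) auto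

definition Mset :: "'a set \<Rightarrow> ('a \<Rightarrow> 'a \<Rightarrow> bool) \<Rightarrow> ('a \<Rightarrow> real) \<Rightarrow> ('a \<Rightarrow> real) \<Rightarrow> real set" where
  "Mset V E \<mu> \<nu> = (\<lambda>S. cost V E (Gs V S (bvec V \<mu> \<nu>))) ` {S\<in>SS V. cpl V \<mu> \<nu> (Gs V S (bvec V \<mu> \<nu>))}"

lemma W_min:
  assumes fV: "finite V" and ex: "coupling V \<mu> \<nu> \<pi>0"
  shows "Mset V E \<mu> \<nu> \<noteq> {}" "wasserstein V E \<mu> \<nu> = Min (Mset V E \<mu> \<nu>)"
proof -
  define C where "C = {c. \<exists>\<pi>. coupling V \<mu> \<nu> \<pi> \<and> c = (\<Sum>x\<in>V. \<Sum>y\<in>V. \<pi> x y * real (graph_dist E x y))}"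
  have fM: "finite (Mset V E \<mu> \<nu>)" unfolding Mset_def using finite_SS[OF fV] by simp
  have MC: "Mset V E \<mu> \<nu> \<subseteq> C"
  proof
    fix m assume "m \<in> Mset V E \<mu> \<nu>"
    then obtain S where S: "cpl V \<mu> \<nu> (Gs V S (bvec V \<mu> \<nu>))" "m = cost V E (Gs V S (bvec V \<mu> \<nu>))"
      unfolding Mset_def by auto
    show "m \<in> C" unfolding C_def using cpl_coupling[OF S(1)] S(2) by (auto simp: cost_def)
  qed
  have low: "\<exists>m\<in>Mset V E \<mu> \<nu>. m \<le> c" if cC: "c \<in> C" for c
  proof -
    obtain \<pi> where \<pi>: "coupling V \<mu> \<nu> \<pi>" "c = (\<Sum>x\<in>V. \<Sum>y\<in>V. \<pi> x y * real (graph_dist E x y))"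
      using cC unfolding C_def by blast
    from basic[OF fV coupling_cpl(1)[OF \<pi>(1)] coupling_cpl(2)[OF \<pi>(1)], of E]
    obtain S where S: "S \<subseteq> V \<times> V" "inj_on (marg V) (U S)" "cpl V \<mu> \<nu> (Gs V S (bvec V \<mu> \<nu>))"
      "cost V E (Gs V S (bvec V \<mu> \<nu>)) \<le> cost V E (rst V \<pi>)" by blast
    have "S \<in> {S\<in>SS V. cpl V \<mu> \<nu> (Gs V S (bvec V \<mu> \<nu>))}" unfolding SS_def using S by blast
    hence "cost V E (Gs V S (bvec V \<mu> \<nu>)) \<in> Mset V E \<mu> \<nu>" unfolding Mset_def by (rule imageI)
    moreover have "cost V E (Gs V S (bvec V \<mu> \<nu>)) \<le> c"
      using S(4) coupling_cpl(3)[OF \<pi>(1), of E] \<pi>(2) by simp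
    ultimately show ?thesis by blast
  qed
  have "(\<Sum>x\<in>V. \<Sum>y\<in>V. \<pi>0 x y * real (graph_dist E x y)) \<in> C" unfolding C_def using ex by blast
  thus ne: "Mset V E \<mu> \<nu> \<noteq> {}" using low by blast
  show "wasserstein V E \<mu> \<nu> = Min (Mset V E \<mu> \<nu>)"
    unfolding wasserstein_def C_def[symmetric]
  proof (rule cInf_eq_minimum)
    show "Min (Mset V E \<mu> \<nu>) \<in> C" using Min_in[OF fM ne] MC by blast
    fix c assume "c \<in> C"
    then obtain m where "m \<in> Mset V E \<mu> \<nu>" "m \<le> c" using low by blast
    hence "Min (Mset V E \<mu> \<nu>) \<le> m" "m \<le> c" using Min_le[OF fM] by auto
    thus "Min (Mset V E \<mu> \<nu>) \<le> c" by linarith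
  qed
qed

lemma Mset_nonneg: "m \<in> Mset V E \<mu> \<nu> \<Longrightarrow> m \<ge> 0"
  unfolding Mset_def using cost_nonneg by auto

lemma Gs_lin:
  assumes "inj_on (marg V) (U S)"
  shows "Gs V S (x + y) = Gs V S x + Gs V S y" "Gs V S (\<lambda>q. c * x q) = (\<lambda>p. c * Gs V S x p)"
  using Gs_prop[OF assms] unfolding Vector_Spaces.linear_iff by auto

lemma Gs_zero:
  assumes "inj_on (marg V) (U S)"
  shows "Gs V S 0 = 0"
proof -
  have "Gs V S (\<lambda>q. 0 * (0::bool \<times> 'a \<Rightarrow> real) q) = (\<lambda>p. 0 * Gs V S 0 p)" by (rule Gs_lin(2)[OF assms])
  hence "Gs V S (\<lambda>q. 0) = (\<lambda>p. 0)" by simp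
  thus ?thesis by (simp add: zero_fun_def)
qed

lemma Gs_zero':
  assumes "inj_on (marg V) (U S)"
  shows "Gs V S (\<lambda>q. 0) = (\<lambda>p. 0)"
  using Gs_zero[OF assms] by (simp add: zero_fun_def)

lemma Gs_sum:
  assumes "inj_on (marg V) (U S)"
  shows "Gs V S (\<Sum>i\<in>I. f i) = (\<Sum>i\<in>I. Gs V S (f i))"
proof (induction I rule: infinite_finite_induct)
  case (infinite I)
  thus ?case using Gs_zero[OF assms] Gs_zero'[OF assms] by simp
next
  case empty
  thus ?case using Gs_zero[OF assms] Gs_zero'[OF assms] by simp
next
  case (insert i I)
  have "Gs V S (sum f (insert i I)) = Gs V S (f i + sum f I)" by (simp only: sum.insert[OF insert(1,2)])
  also have "\<dots> = Gs V S (f i) + Gs V S (sum f I)" by (rule Gs_lin(1)[OF assms])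
  also have "\<dots> = Gs V S (f i) + (\<Sum>i\<in>I. Gs V S (f i))" using insert(3) by (simp only:)
  also have "\<dots> = (\<Sum>i\<in>insert i I. Gs V S (f i))" by (simp only: sum.insert[OF insert(1,2)])
  finally show ?case .
qed

lemma ES_form: "finite R \<Longrightarrow> R \<subseteq> {0..} \<Longrightarrow> ES (\<lambda>k. \<Sum>r\<in>R. c r * r ^ k)"
  unfolding ES_def by blast

locale seqs =
  fixes V :: "'a set" and E :: "'a \<Rightarrow> 'a \<Rightarrow> bool" and m n :: "nat \<Rightarrow> 'a \<Rightarrow> real"
    and R1 R2 :: "real set" and c1 c2 :: "real \<Rightarrow> 'a \<Rightarrow> real"
  assumes finV: "finite V"
    and R1: "finite R1" "R1 \<subseteq> {0..}" and R2: "finite R2" "R2 \<subseteq> {0..}"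
    and m: "\<And>k y. y \<in> V \<Longrightarrow> m k y = (\<Sum>r\<in>R1. c1 r y * r ^ k)"
    and n: "\<And>k y. y \<in> V \<Longrightarrow> n k y = (\<Sum>r\<in>R2. c2 r y * r ^ k)"
begin

definition bk where "bk k = bvec V (m k) (n k)"

lemma bk_form:
  "bk k = (\<Sum>r\<in>R1. (\<lambda>q. r ^ k * bvec V (c1 r) (\<lambda>_. 0) q)) + (\<Sum>r\<in>R2. (\<lambda>q. r ^ k * bvec V (\<lambda>_. 0) (c2 r) q))"
proof
  fix q :: "bool \<times> 'a"
  obtain t x where q: "q = (t, x)" by (cases q)
  show "bk k q = ((\<Sum>r\<in>R1. (\<lambda>q. r ^ k * bvec V (c1 r) (\<lambda>_. 0) q)) +
        (\<Sum>r\<in>R2. (\<lambda>q. r ^ k * bvec V (\<lambda>_. 0) (c2 r) q))) q"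
    unfolding q plus_fun_apply fsum_apply bk_def bvec_def using m n
    by (cases t; cases "x \<in> V") (auto simp: mult.commute)
qed

lemma G_ES:
  assumes S: "S \<in> SS V"
  shows "ES (\<lambda>k. Gs V S (bk k) p)"
proof -
  have inj: "inj_on (marg V) (U S)" using S unfolding SS_def by auto
  have "Gs V S (bk k) p = (\<Sum>r\<in>R1. Gs V S (bvec V (c1 r) (\<lambda>_. 0)) p * r ^ k) +
                          (\<Sum>r\<in>R2. Gs V S (bvec V (\<lambda>_. 0) (c2 r)) p * r ^ k)" for k
    unfolding bk_form Gs_lin(1)[OF inj] Gs_sum[OF inj] Gs_lin(2)[OF inj] plus_fun_apply fsum_apply
    by (simp add: mult.commute)
  thus ?thesis using ES_add[OF ES_form[OF R1] ES_form[OF R2]] by simp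
qed

definition h where "h S k = cost V E (Gs V S (bk k))"
definition valid where "valid S k \<longleftrightarrow> cpl V (m k) (n k) (Gs V S (bk k))"

lemma h_ES: "S \<in> SS V \<Longrightarrow> ES (h S)"
  unfolding h_def cost_def
  by (intro ES_sum finV) (subst mult.commute, intro ES_scale G_ES, assumption)

definition dec :: "(nat \<Rightarrow> bool) \<Rightarrow> bool" where
  "dec P \<longleftrightarrow> eventually P sequentially \<or> eventually (\<lambda>k. \<not> P k) sequentially"

lemma dec_nonneg: assumes "ES s" shows "dec (\<lambda>k. s k \<ge> 0)"
proof -
  from ES_sign[OF assms] consider
    "eventually (\<lambda>k. s k = 0) sequentially" | "eventually (\<lambda>k. s k > 0) sequentially"
    | "eventually (\<lambda>k. s k < 0) sequentially" by blast
  thus ?thesis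
  proof cases
    case 1 hence "eventually (\<lambda>k. s k \<ge> 0) sequentially" by (rule eventually_mono) simp
    thus ?thesis unfolding dec_def by blast
  next
    case 2 hence "eventually (\<lambda>k. s k \<ge> 0) sequentially" by (rule eventually_mono) simp
    thus ?thesis unfolding dec_def by blast
  next
    case 3 hence "eventually (\<lambda>k. \<not> s k \<ge> 0) sequentially" by (rule eventually_mono) simp
    thus ?thesis unfolding dec_def by blast
  qed
qed

lemma dec_zero: assumes "ES s" shows "dec (\<lambda>k. s k = 0)"
proof -
  from ES_sign[OF assms] consider
    "eventually (\<lambda>k. s k = 0) sequentially" | "eventually (\<lambda>k. s k > 0) sequentially"
    | "eventually (\<lambda>k. s k < 0) sequentially" by blast
  thus ?thesis
  proof cases
    case 1 thus ?thesis unfolding dec_def by blast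
  next
    case 2 hence "eventually (\<lambda>k. \<not> s k = 0) sequentially" by (rule eventually_mono) simp
    thus ?thesis unfolding dec_def by blast
  next
    case 3 hence "eventually (\<lambda>k. \<not> s k = 0) sequentially" by (rule eventually_mono) simp
    thus ?thesis unfolding dec_def by blast
  qed
qed

lemma dec_conj: assumes "dec P" "dec Q" shows "dec (\<lambda>k. P k \<and> Q k)"
proof (cases "eventually P sequentially \<and> eventually Q sequentially")
  case True thus ?thesis unfolding dec_def using eventually_conj by blast
next
  case False
  hence "eventually (\<lambda>k. \<not> P k) sequentially \<or> eventually (\<lambda>k. \<not> Q k) sequentially"
    using assms unfolding dec_def by blast
  hence "eventually (\<lambda>k. \<not> (P k \<and> Q k)) sequentially"
    by (elim disjE) (erule eventually_mono, simp)+
  thus ?thesis unfolding dec_def by blast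
qed

lemma dec_ball:
  assumes "finite A" "\<And>a. a \<in> A \<Longrightarrow> dec (P a)"
  shows "dec (\<lambda>k. \<forall>a\<in>A. P a k)"
proof (cases "\<forall>a\<in>A. eventually (P a) sequentially")
  case True
  have "eventually (\<lambda>k. \<forall>a\<in>A. P a k) sequentially"
    by (rule eventually_ball_finite[OF assms(1)]) (use True in auto)
  thus ?thesis unfolding dec_def by blast
next
  case False
  then obtain a where "a \<in> A" "\<not> eventually (P a) sequentially" by blast
  hence "eventually (\<lambda>k. \<not> P a k) sequentially" using assms(2) unfolding dec_def by blast
  hence "eventually (\<lambda>k. \<not> (\<forall>a\<in>A. P a k)) sequentially"
    by (rule eventually_mono) (use \<open>a \<in> A\<close> in blast)
  thus ?thesis unfolding dec_def by blast
qed

lemma cpl_iff: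
  "cpl V \<mu> \<nu> \<pi> \<longleftrightarrow> (\<forall>p\<in>V \<times> V. \<pi> p \<ge> 0) \<and>
     (\<forall>q\<in>(UNIV :: bool set) \<times> V. marg V \<pi> q - bvec V \<mu> \<nu> q = 0)"
proof -
  have "marg V \<pi> = bvec V \<mu> \<nu> \<longleftrightarrow> (\<forall>q\<in>(UNIV :: bool set) \<times> V. marg V \<pi> q - bvec V \<mu> \<nu> q = 0)"
  proof
    assume H: "\<forall>q\<in>(UNIV :: bool set) \<times> V. marg V \<pi> q - bvec V \<mu> \<nu> q = 0"
    show "marg V \<pi> = bvec V \<mu> \<nu>"
    proof
      fix q :: "bool \<times> 'a"
      obtain t x where q: "q = (t, x)" by (cases q)
      show "marg V \<pi> q = bvec V \<mu> \<nu> q"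
      proof (cases "x \<in> V")
        case True thus ?thesis using H q by auto
      next
        case False thus ?thesis unfolding q marg_def bvec_def by simp
      qed
    qed
  qed simp
  thus ?thesis unfolding cpl_def by auto
qed

lemma valid_dec: assumes S: "S \<in> SS V" shows "dec (valid S)"
proof -
  have "dec (\<lambda>k. (\<forall>p\<in>V \<times> V. Gs V S (bk k) p \<ge> 0) \<and>
     (\<forall>q\<in>(UNIV :: bool set) \<times> V. marg V (Gs V S (bk k)) q - bvec V (m k) (n k) q = 0))"
  proof (intro dec_conj dec_ball)
    show "finite (V \<times> V)" "finite ((UNIV :: bool set) \<times> V)" using finV by auto
    fix p show "dec (\<lambda>k. Gs V S (bk k) p \<ge> 0)" by (intro dec_nonneg G_ES S)
  next
    fix q :: "bool \<times> 'a" assume "q \<in> (UNIV :: bool set) \<times> V"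
    then obtain t x where q: "q = (t, x)" "x \<in> V" by auto
    have e1: "ES (\<lambda>k. marg V (Gs V S (bk k)) q)"
      unfolding q(1) marg_def using q(2)
      by (cases t) (auto intro!: ES_sum finV G_ES S)
    have e2: "ES (\<lambda>k. bvec V (m k) (n k) q)"
      unfolding q(1) bvec_def using q(2) m n
      by (cases t) (auto intro: ES_form[OF R1] ES_form[OF R2])
    show "dec (\<lambda>k. marg V (Gs V S (bk k)) q - bvec V (m k) (n k) q = 0)"
      by (intro dec_zero ES_diff e1 e2)
  qed
  thus ?thesis unfolding valid_def cpl_iff .
qed

lemma ev_min:
  assumes "finite F" "F \<noteq> {}" "\<And>S. S \<in> F \<Longrightarrow> ES (g S)"
  shows "\<exists>S0\<in>F. eventually (\<lambda>k. \<forall>S\<in>F. g S0 k \<le> g S k) sequentially"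
  using assms
proof (induction F rule: finite_ne_induct)
  case (singleton x) thus ?case by simp
next
  case (insert S F)
  obtain S0 where S0: "S0 \<in> F" "eventually (\<lambda>k. \<forall>S\<in>F. g S0 k \<le> g S k) sequentially"
    using insert by auto
  have "ES (\<lambda>k. g S0 k - g S k)" using insert.prems S0(1) by (intro ES_diff) auto
  from ES_sign[OF this] consider
    "eventually (\<lambda>k. g S0 k - g S k \<ge> 0) sequentially" | "eventually (\<lambda>k. g S0 k - g S k < 0) sequentially"
  proof (elim disjE)
    assume "eventually (\<lambda>k. g S0 k - g S k = 0) sequentially"
    hence "eventually (\<lambda>k. g S0 k - g S k \<ge> 0) sequentially" by (rule eventually_mono) simp
    thus thesis using that(1) by blast
  next
    assume "eventually (\<lambda>k. g S0 k - g S k > 0) sequentially"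
    hence "eventually (\<lambda>k. g S0 k - g S k \<ge> 0) sequentially" by (rule eventually_mono) simp
    thus thesis using that(1) by blast
  next
    assume "eventually (\<lambda>k. g S0 k - g S k < 0) sequentially"
    thus thesis using that(2) by blast
  qed
  thus ?case
  proof cases
    case 1
    have "eventually (\<lambda>k. \<forall>S'\<in>insert S F. g S k \<le> g S' k) sequentially"
      using eventually_conj[OF 1 S0(2)] by (rule eventually_mono) (auto intro: order_trans)
    thus ?thesis by blast
  next
    case 2
    have "eventually (\<lambda>k. \<forall>S'\<in>insert S F. g S0 k \<le> g S' k) sequentially"
      using eventually_conj[OF 2 S0(2)] by (rule eventually_mono) auto
    thus ?thesis using S0(1) by blast
  qed
qed

end

theorem theorem6p3:
  fixes V :: "'a set" and E :: "'a \<Rightarrow> 'a \<Rightarrow> bool" and u v :: 'a and \<alpha> \<beta> :: real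
  assumes "guvab V E u v \<alpha> \<beta>"
    and "(\<lambda>k. W V E u v \<alpha> \<beta> k) \<longlonglongrightarrow> 0"
    and "\<not> eventually_constant (\<lambda>k. W V E u v \<alpha> \<beta> (2 * k))"
  shows "\<exists>lam_even c. 0 < lam_even \<and> lam_even < 1 \<and> c > 0 \<and>
           (\<lambda>k. W V E u v \<alpha> \<beta> (2 * k)) \<sim>[at_top] (\<lambda>k. c * lam_even ^ (2 * k))"
proof -
  have sg: "simple_graph V E" and uV: "u \<in> V" and vV: "v \<in> V"
    and a0: "0 \<le> \<alpha>" and a1: "\<alpha> \<le> 1" and b0: "0 \<le> \<beta>" and b1: "\<beta> \<le> 1"
    using assms(1) unfolding guvab_def connected_graph_def by auto
  have fV: "finite V" using simple_finite[OF sg] .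
  define m where "m k = walk_dist V E \<alpha> u (2 * k)" for k
  define n where "n k = walk_dist V E \<beta> v (2 * k)" for k
  obtain R1 c1 where R1: "finite R1" "R1 \<subseteq> {0..}"
    "\<And>k y. y \<in> V \<Longrightarrow> m k y = (\<Sum>r\<in>R1. c1 r y * r ^ k)"
    using walk_even[OF sg uV, of \<alpha>] unfolding m_def by blast
  obtain R2 c2 where R2: "finite R2" "R2 \<subseteq> {0..}"
    "\<And>k y. y \<in> V \<Longrightarrow> n k y = (\<Sum>r\<in>R2. c2 r y * r ^ k)"
    using walk_even[OF sg vV, of \<beta>] unfolding n_def by blast
  interpret seqs V E m n R1 R2 c1 c2
    by unfold_locales (use fV R1 R2 in auto)
  have cex: "coupling V (m k) (n k) (\<lambda>x y. m k x * n k y)" for k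
    unfolding coupling_def
  proof (intro conjI ballI)
    fix x y assume "x \<in> V" "y \<in> V"
    show "0 \<le> m k x * n k y" unfolding m_def n_def
      using walk_nonneg[OF a0 a1, of V E u "2 * k" x] walk_nonneg[OF b0 b1, of V E v "2 * k" y]
      by (intro mult_nonneg_nonneg)
  next
    fix x assume "x \<in> V"
    show "(\<Sum>y\<in>V. m k x * n k y) = m k x"
      using walk_sum[OF sg vV, of \<beta> "2 * k"] unfolding n_def by (simp add: sum_distrib_left[symmetric])
  next
    fix y assume "y \<in> V"
    show "(\<Sum>x\<in>V. m k x * n k y) = n k y"
      using walk_sum[OF sg uV, of \<alpha> "2 * k"] unfolding m_def by (simp add: sum_distrib_right[symmetric])
  qed
  have Wk: "W V E u v \<alpha> \<beta> (2 * k) = Min ((\<lambda>S. h S k) ` {S\<in>SS V. valid S k})"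
    and Mne: "{S\<in>SS V. valid S k} \<noteq> {}" for k
  proof -
    have "W V E u v \<alpha> \<beta> (2 * k) = wasserstein V E (m k) (n k)" unfolding W_def m_def n_def ..
    also have "\<dots> = Min (Mset V E (m k) (n k))" by (rule W_min(2)[OF fV cex])
    also have "Mset V E (m k) (n k) = (\<lambda>S. h S k) ` {S\<in>SS V. valid S k}"
      unfolding Mset_def h_def valid_def bk_def ..
    finally show "W V E u v \<alpha> \<beta> (2 * k) = Min ((\<lambda>S. h S k) ` {S\<in>SS V. valid S k})" .
    show "{S\<in>SS V. valid S k} \<noteq> {}"
      using W_min(1)[OF fV cex, of E k] unfolding Mset_def valid_def bk_def by auto
  qed
  define F where "F = {S\<in>SS V. eventually (valid S) sequentially}"
  have evF: "eventually (\<lambda>k. \<forall>S\<in>SS V. valid S k \<longleftrightarrow> S \<in> F) sequentially"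
  proof (rule eventually_ball_finite[OF finite_SS[OF fV]], rule ballI)
    fix S assume S: "S \<in> SS V"
    show "eventually (\<lambda>k. valid S k \<longleftrightarrow> S \<in> F) sequentially"
    proof (cases "S \<in> F")
      case True
      hence "eventually (valid S) sequentially" unfolding F_def by auto
      thus ?thesis by (rule eventually_mono) (use True in simp)
    next
      case False
      hence "eventually (\<lambda>k. \<not> valid S k) sequentially" using valid_dec[OF S] S
        unfolding F_def dec_def by auto
      thus ?thesis by (rule eventually_mono) (use False in simp)
    qed
  qed
  have FSS: "F \<subseteq> SS V" unfolding F_def by auto
  have fF: "finite F" using finite_subset[OF FSS finite_SS[OF fV]] .
  have eqF: "eventually (\<lambda>k. {S\<in>SS V. valid S k} = F) sequentially"
    using evF by (rule eventually_mono) (use FSS in auto)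
  then obtain N where N: "\<And>k. k \<ge> N \<Longrightarrow> {S\<in>SS V. valid S k} = F"
    unfolding eventually_sequentially by blast
  have Fne: "F \<noteq> {}" using Mne[of N] N[of N] by simp
  have hF: "\<And>S. S \<in> F \<Longrightarrow> ES (h S)" using FSS h_ES by blast
  obtain S0 where S0: "S0 \<in> F" "eventually (\<lambda>k. \<forall>S\<in>F. h S0 k \<le> h S k) sequentially"
    by (rule bexE[OF ev_min[OF fF Fne hF]])
  define s where "s = h S0"
  have "S0 \<in> SS V" using S0(1) FSS by blast
  hence sES: "ES s" unfolding s_def by (rule h_ES)
  have evW: "eventually (\<lambda>k. W V E u v \<alpha> \<beta> (2 * k) = s k) sequentially"
    using eventually_conj[OF eqF S0(2)]
  proof (rule eventually_mono)
    fix k assume k: "{S\<in>SS V. valid S k} = F \<and> (\<forall>S\<in>F. h S0 k \<le> h S k)"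
    have "W V E u v \<alpha> \<beta> (2 * k) = Min ((\<lambda>S. h S k) ` F)" using Wk[of k] k by simp
    also have "\<dots> = h S0 k"
    proof (rule Min_eqI)
      show "finite ((\<lambda>S. h S k) ` F)" using fF by blast
      show "h S0 k \<in> (\<lambda>S. h S k) ` F" using S0(1) by blast
      fix y assume "y \<in> (\<lambda>S. h S k) ` F"
      thus "h S0 k \<le> y" using k by blast
    qed
    finally show "W V E u v \<alpha> \<beta> (2 * k) = s k" unfolding s_def .
  qed
  have W2: "(\<lambda>k. W V E u v \<alpha> \<beta> (2 * k)) \<longlonglongrightarrow> 0"
    using LIMSEQ_subseq_LIMSEQ[OF assms(2), of "\<lambda>k. 2 * k"] by (simp add: strict_mono_def o_def)
  have s0: "s \<longlonglongrightarrow> 0" using W2 evW by (rule Lim_transform_eventually)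
  have snn: "eventually (\<lambda>k. s k \<ge> 0) sequentially"
  proof -
    have "eventually (valid S0) sequentially" using S0(1) unfolding F_def by auto
    thus ?thesis by (rule eventually_mono) (simp add: s_def h_def valid_def cost_nonneg)
  qed
  have snz: "\<not> eventually (\<lambda>k. s k = 0) sequentially"
  proof
    assume "eventually (\<lambda>k. s k = 0) sequentially"
    hence "eventually (\<lambda>k. W V E u v \<alpha> \<beta> (2 * k) = 0) sequentially"
      using evW by (rule eventually_elim2) simp
    then obtain M where M: "\<And>k. k \<ge> M \<Longrightarrow> W V E u v \<alpha> \<beta> (2 * k) = 0"
      unfolding eventually_sequentially by blast
    hence "eventually_constant (\<lambda>k. W V E u v \<alpha> \<beta> (2 * k))"
      unfolding eventually_constant_def by (intro exI[of _ M]) auto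
    thus False using assms(3) by simp
  qed
  obtain q c where qc: "0 < q" "q < 1" "c > 0" and L: "(\<lambda>k. s k / (c * q ^ k)) \<longlonglongrightarrow> 1"
    using ES_final[OF sES s0 snn snz] by blast
  define lam where "lam = sqrt q"
  have lam: "0 < lam" "lam < 1" unfolding lam_def using qc by auto
  have lpow: "lam ^ (2 * k) = q ^ k" for k
    unfolding lam_def power_mult using qc by simp
  have "(\<lambda>k. W V E u v \<alpha> \<beta> (2 * k) / (c * lam ^ (2 * k))) \<longlonglongrightarrow> 1"
  proof (rule Lim_transform_eventually[OF L])
    show "eventually (\<lambda>k. s k / (c * q ^ k) = W V E u v \<alpha> \<beta> (2 * k) / (c * lam ^ (2 * k))) sequentially"
      using evW by (rule eventually_mono) (simp add: lpow)
  qed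
  hence "(\<lambda>k. W V E u v \<alpha> \<beta> (2 * k)) \<sim>[at_top] (\<lambda>k. c * lam ^ (2 * k))"
    by (intro asymp_equivI')
  thus ?thesis using lam qc by blast
qed

end
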